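(* Let $1<w\le 2$, $h>1$, $k\ge 2$, and let $\frac12\le y_1<\dots<y_n\le h-\frac12$ be uniformly spaced with $y_{i+1}-y_i=\frac1k$ for all $i$. Let $(\mathbf x,\prec)$ be a $\frac1k$-reasonable layout of this instance, and let $W=[a,b]\subseteq[\frac12,h-\frac12]$ and $W'=[a-\frac1k,b+\frac1k]$. Then the number of bad squares $s_i$ with $y_i\in W$ is at most three times the number of standard bad squares $s_i$ with $y_i\in W'$.
   Context: The instance is the strip $T=[0,w]\times[0,h]$ with the given $y_i$. A layout is a pair $(\mathbf x,\prec)$ where $\mathbf x=(x_1,\dots,x_n)$ with $x_i\in[\frac12,w-\frac12]$, and $\prec$ is a total order on the squares $s_1,\dots,s_n$, where $s_i$ is the closed axis-parallel unit square with centre $(x_i,y_i)$. If $s_i\prec s_j$ we say $s_j$ is in front of $s_i$ and $s_i$ is behind $s_j$. A point $p$ on the boundary of $s_i$ is visible if every square $s_j$ ($j\neq i$) containing $p$ is behind $s_i$, and covered otherwise. The visible perimeter of $s_i$ is the total length of its visible boundary points; the gap of $s_i$ is its visible perimeter minus $2$, the gap of a layout is the minimum gap of its squares, and a layout is $\varepsilon$-reasonable if its gap is larger than $\varepsilon$. A bad square is a square with at least two of its four corners covered; a standard bad square is a bad square one of whose vertical sides is entirely covered. *)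

theory Defs
  imports "HOL-Analysis.Analysis"
begin

text \<open>Squares are indexed by i < n. Square i has centre (x i, y i).
  The order is a strict linear order P on {..<n}: (i,j) \<in> P means s_i \<prec> s_j,
  i.e. s_j is in front of s_i.\<close>

definition sq :: "(nat \<Rightarrow> real) \<Rightarrow> (nat \<Rightarrow> real) \<Rightarrow> nat \<Rightarrow> (real \<times> real) set" where
  "sq x y i = {p. \<bar>fst p - x i\<bar> \<le> 1/2 \<and> \<bar>snd p - y i\<bar> \<le> 1/2}"

definition is_layout :: "real \<Rightarrow> nat \<Rightarrow> (nat \<Rightarrow> real) \<Rightarrow> (nat \<times> nat) set \<Rightarrow> bool" where
  "is_layout w n x P \<longleftrightarrow> (\<forall>i<n. 1/2 \<le> x i \<and> x i \<le> w - 1/2) \<and> strict_linear_order_on {..<n} P"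

definition covered :: "nat \<Rightarrow> (nat \<Rightarrow> real) \<Rightarrow> (nat \<Rightarrow> real) \<Rightarrow> (nat \<times> nat) set \<Rightarrow> nat \<Rightarrow> real \<times> real \<Rightarrow> bool" where
  "covered n x y P i p \<longleftrightarrow> (\<exists>j<n. j \<noteq> i \<and> p \<in> sq x y j \<and> (i, j) \<in> P)"

definition visible :: "nat \<Rightarrow> (nat \<Rightarrow> real) \<Rightarrow> (nat \<Rightarrow> real) \<Rightarrow> (nat \<times> nat) set \<Rightarrow> nat \<Rightarrow> real \<times> real \<Rightarrow> bool" where
  "visible n x y P i p \<longleftrightarrow> \<not> covered n x y P i p"

definition bottom_side :: "(nat \<Rightarrow> real) \<Rightarrow> (nat \<Rightarrow> real) \<Rightarrow> nat \<Rightarrow> real \<Rightarrow> real \<times> real" where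
  "bottom_side x y i t = (x i + t, y i - 1/2)"
definition top_side :: "(nat \<Rightarrow> real) \<Rightarrow> (nat \<Rightarrow> real) \<Rightarrow> nat \<Rightarrow> real \<Rightarrow> real \<times> real" where
  "top_side x y i t = (x i + t, y i + 1/2)"
definition left_side :: "(nat \<Rightarrow> real) \<Rightarrow> (nat \<Rightarrow> real) \<Rightarrow> nat \<Rightarrow> real \<Rightarrow> real \<times> real" where
  "left_side x y i t = (x i - 1/2, y i + t)"
definition right_side :: "(nat \<Rightarrow> real) \<Rightarrow> (nat \<Rightarrow> real) \<Rightarrow> nat \<Rightarrow> real \<Rightarrow> real \<times> real" where
  "right_side x y i t = (x i + 1/2, y i + t)"

definition side_visible_length ::
  "nat \<Rightarrow> (nat \<Rightarrow> real) \<Rightarrow> (nat \<Rightarrow> real) \<Rightarrow> (nat \<times> nat) set \<Rightarrow> nat \<Rightarrow> (real \<Rightarrow> real \<times> real) \<Rightarrow> real" where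
  "side_visible_length n x y P i c = measure lborel {t \<in> {-1/2..1/2}. visible n x y P i (c t)}"

definition visible_perimeter :: "nat \<Rightarrow> (nat \<Rightarrow> real) \<Rightarrow> (nat \<Rightarrow> real) \<Rightarrow> (nat \<times> nat) set \<Rightarrow> nat \<Rightarrow> real" where
  "visible_perimeter n x y P i =
     side_visible_length n x y P i (bottom_side x y i) + side_visible_length n x y P i (top_side x y i)
   + side_visible_length n x y P i (left_side x y i) + side_visible_length n x y P i (right_side x y i)"

definition sq_gap :: "nat \<Rightarrow> (nat \<Rightarrow> real) \<Rightarrow> (nat \<Rightarrow> real) \<Rightarrow> (nat \<times> nat) set \<Rightarrow> nat \<Rightarrow> real" where
  "sq_gap n x y P i = visible_perimeter n x y P i - 2"

text \<open>The gap of the layout is the minimum gap; it exceeds \<epsilon> iff every square's gap does.\<close>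
definition reasonable :: "real \<Rightarrow> nat \<Rightarrow> (nat \<Rightarrow> real) \<Rightarrow> (nat \<Rightarrow> real) \<Rightarrow> (nat \<times> nat) set \<Rightarrow> bool" where
  "reasonable \<epsilon> n x y P \<longleftrightarrow> (\<forall>i<n. sq_gap n x y P i > \<epsilon>)"

definition corners :: "(nat \<Rightarrow> real) \<Rightarrow> (nat \<Rightarrow> real) \<Rightarrow> nat \<Rightarrow> (real \<times> real) set" where
  "corners x y i = {(x i - 1/2, y i - 1/2), (x i + 1/2, y i - 1/2),
                    (x i - 1/2, y i + 1/2), (x i + 1/2, y i + 1/2)}"

definition bad :: "nat \<Rightarrow> (nat \<Rightarrow> real) \<Rightarrow> (nat \<Rightarrow> real) \<Rightarrow> (nat \<times> nat) set \<Rightarrow> nat \<Rightarrow> bool" where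
  "bad n x y P i \<longleftrightarrow> card {c \<in> corners x y i. covered n x y P i c} \<ge> 2"

definition standard_bad :: "nat \<Rightarrow> (nat \<Rightarrow> real) \<Rightarrow> (nat \<Rightarrow> real) \<Rightarrow> (nat \<times> nat) set \<Rightarrow> nat \<Rightarrow> bool" where
  "standard_bad n x y P i \<longleftrightarrow> bad n x y P i \<and>
     ((\<forall>t \<in> {-1/2..1/2}. covered n x y P i (left_side x y i t)) \<or>
      (\<forall>t \<in> {-1/2..1/2}. covered n x y P i (right_side x y i t)))"

end

theory Submission
  imports Defs
begin


lemma sq_iff: "(a, b) \<in> sq x y j \<longleftrightarrow> x j - 1/2 \<le> a \<and> a \<le> x j + 1/2 \<and> y j - 1/2 \<le> b \<and> b \<le> y j + 1/2"
  unfolding sq_def mem_Collect_eq fst_conv snd_conv abs_le_iff by linarith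

lemma covI: "j < n \<Longrightarrow> j \<noteq> i \<Longrightarrow> (i, j) \<in> P \<Longrightarrow> x j - 1/2 \<le> a \<Longrightarrow> a \<le> x j + 1/2
  \<Longrightarrow> y j - 1/2 \<le> b \<Longrightarrow> b \<le> y j + 1/2 \<Longrightarrow> covered n x y P i (a, b)"
  unfolding covered_def sq_iff by blast

lemma covE: assumes "covered n x y P i (a, b)"
  obtains j where "j < n" "j \<noteq> i" "(i, j) \<in> P" "x j - 1/2 \<le> a" "a \<le> x j + 1/2"
    "y j - 1/2 \<le> b" "b \<le> y j + 1/2"
  using assms unfolding covered_def sq_iff by blast

lemma svl_le:
  assumes "\<And>t. -1/2 \<le> t \<Longrightarrow> t \<le> 1/2 \<Longrightarrow> \<not> covered n x y P i (c t) \<Longrightarrow> l \<le> t \<and> t \<le> u"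
    and "l \<le> u"
  shows "side_visible_length n x y P i c \<le> u - l"
proof -
  let ?A = "{t \<in> {-1/2..1/2}. visible n x y P i (c t)}"
  have sub: "?A \<subseteq> {l..u}" using assms(1) by (auto simp: visible_def)
  show ?thesis
  proof (cases "?A \<in> sets lborel")
    case True
    have "{l..u} \<in> fmeasurable lborel" by (metis cbox_interval fmeasurable_cbox)
    then have "measure lborel ?A \<le> measure lborel {l..u}" using sub True
      by (intro measure_mono_fmeasurable) auto
    then show ?thesis using assms(2) by (simp add: side_visible_length_def)
  next
    case False then show ?thesis using assms(2) by (simp add: side_visible_length_def measure_notin_sets)
  qed
qed

lemma svl_le1: "side_visible_length n x y P i c \<le> 1"
  using svl_le[of n x y P i c "-1/2" "1/2"] by simp

lemma bad_cases:
  assumes "bad n x y P i"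
  shows "(covered n x y P i (x i - 1/2, y i - 1/2) \<or> covered n x y P i (x i + 1/2, y i - 1/2)) \<and>
         (covered n x y P i (x i - 1/2, y i + 1/2) \<or> covered n x y P i (x i + 1/2, y i + 1/2)) \<or>
         (covered n x y P i (x i - 1/2, y i - 1/2) \<and> covered n x y P i (x i + 1/2, y i - 1/2)) \<or>
         (covered n x y P i (x i - 1/2, y i + 1/2) \<and> covered n x y P i (x i + 1/2, y i + 1/2))"
proof (rule ccontr)
  assume neg: "\<not> ?thesis"
  let ?C = "{c \<in> corners x y i. covered n x y P i c}"
  have "\<exists>c. ?C \<subseteq> {c}" using neg unfolding corners_def by auto
  then obtain c where "?C \<subseteq> {c}" by blast
  then have "card ?C \<le> 1" using card_mono[of "{c}" ?C] by simp
  with assms show False unfolding bad_def by simp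
qed

lemma full_std:
  assumes "(\<forall>t\<in>{-1/2..1/2}. covered n x y P i (left_side x y i t)) \<or>
           (\<forall>t\<in>{-1/2..1/2}. covered n x y P i (right_side x y i t))"
  shows "standard_bad n x y P i"
proof -
  let ?C = "{c \<in> corners x y i. covered n x y P i c}"
  have fin: "finite ?C" unfolding corners_def by simp
  have "\<exists>c1 c2. c1 \<noteq> c2 \<and> c1 \<in> ?C \<and> c2 \<in> ?C"
  proof (cases "\<forall>t\<in>{-1/2..1/2}. covered n x y P i (left_side x y i t)")
    case True
    have "covered n x y P i (left_side x y i (-1/2))" "covered n x y P i (left_side x y i (1/2))"
      using True by auto
    then show ?thesis unfolding corners_def left_side_def
      by (intro exI[of _ "(x i - 1/2, y i - 1/2)"] exI[of _ "(x i - 1/2, y i + 1/2)"]) auto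
  next
    case False
    with assms have R: "\<forall>t\<in>{-1/2..1/2}. covered n x y P i (right_side x y i t)" by blast
    have "covered n x y P i (right_side x y i (-1/2))" "covered n x y P i (right_side x y i (1/2))"
      using R by auto
    then show ?thesis unfolding corners_def right_side_def
      by (intro exI[of _ "(x i + 1/2, y i - 1/2)"] exI[of _ "(x i + 1/2, y i + 1/2)"]) auto
  qed
  then obtain c1 c2 where "c1 \<noteq> c2" "c1 \<in> ?C" "c2 \<in> ?C" by blast
  then have "card {c1, c2} \<le> card ?C" using fin by (intro card_mono) auto
  with \<open>c1 \<noteq> c2\<close> have "bad n x y P i" unfolding bad_def by simp
  with assms show ?thesis unfolding standard_bad_def by blast
qed


locale lay =
  fixes n :: nat and x y :: "nat \<Rightarrow> real" and P :: "(nat \<times> nat) set" and dl :: real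
  assumes dl_pos: "0 < dl" and dl_le: "dl \<le> 1/2"
    and xlo: "\<And>i. i < n \<Longrightarrow> 1/2 \<le> x i" and xhi: "\<And>i. i < n \<Longrightarrow> x i \<le> 3/2"
    and ysuc: "\<And>i. i + 1 < n \<Longrightarrow> y (i + 1) = y i + dl"
    and slo: "strict_linear_order_on {..<n} P"
    and reas: "\<And>i. i < n \<Longrightarrow> 2 + dl < visible_perimeter n x y P i"
begin

abbreviation "VB i \<equiv> side_visible_length n x y P i (bottom_side x y i)"
abbreviation "VT i \<equiv> side_visible_length n x y P i (top_side x y i)"
abbreviation "VL i \<equiv> side_visible_length n x y P i (left_side x y i)"
abbreviation "VR i \<equiv> side_visible_length n x y P i (right_side x y i)"
abbreviation "std i \<equiv> standard_bad n x y P i"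

lemma vp: "i < n \<Longrightarrow> 2 + dl < VB i + VT i + VL i + VR i"
  using reas[of i] unfolding visible_perimeter_def by simp

lemma yform: "i < n \<Longrightarrow> y i = y 0 + real i * dl"
proof (induction i)
  case 0 then show ?case by simp
next
  case (Suc i)
  then have "y (Suc i) = y i + dl" using ysuc[of i] by simp
  with Suc show ?case by (simp add: algebra_simps)
qed

lemma y_less: "i < n \<Longrightarrow> j < n \<Longrightarrow> y i < y j \<longleftrightarrow> i < j"
proof -
  assume a: "i < n" "j < n"
  have "y i < y j \<longleftrightarrow> real i * dl < real j * dl" using a yform[of i] yform[of j] by simp
  also have "\<dots> \<longleftrightarrow> real i < real j" using dl_pos by (rule mult_less_cancel_right_pos)
  finally show ?thesis by simp
qed

lemma y_le: "i < n \<Longrightarrow> j < n \<Longrightarrow> i \<le> j \<Longrightarrow> y i \<le> y j"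
  using y_less by (metis le_less not_less)

lemma y_inj: "i < n \<Longrightarrow> j < n \<Longrightarrow> y i = y j \<Longrightarrow> i = j"
  using y_less by (metis less_irrefl nat_neq_iff)

lemma tot: "a < n \<Longrightarrow> b < n \<Longrightarrow> a \<noteq> b \<Longrightarrow> (a, b) \<in> P \<or> (b, a) \<in> P"
  using slo unfolding strict_linear_order_on_def total_on_def by blast

lemma trP: "(a, b) \<in> P \<Longrightarrow> (b, c) \<in> P \<Longrightarrow> (a, c) \<in> P"
  using slo unfolding strict_linear_order_on_def trans_def by blast

lemma irrP: "(a, a) \<notin> P"
  using slo unfolding strict_linear_order_on_def irrefl_def by blast

lemma asymP: "(a, b) \<in> P \<Longrightarrow> (b, a) \<notin> P"
  using trP irrP by blast

lemma svlL: "l \<le> u \<Longrightarrow> (\<And>t. -1/2 \<le> t \<Longrightarrow> t \<le> 1/2 \<Longrightarrow> t < l \<or> u < t \<Longrightarrow> covered n x y P s (x s - 1/2, y s + t)) \<Longrightarrow> VL s \<le> u - l"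
  by (rule svl_le) (auto simp: left_side_def not_le[symmetric])
lemma svlR: "l \<le> u \<Longrightarrow> (\<And>t. -1/2 \<le> t \<Longrightarrow> t \<le> 1/2 \<Longrightarrow> t < l \<or> u < t \<Longrightarrow> covered n x y P s (x s + 1/2, y s + t)) \<Longrightarrow> VR s \<le> u - l"
  by (rule svl_le) (auto simp: right_side_def not_le[symmetric])
lemma svlB: "l \<le> u \<Longrightarrow> (\<And>t. -1/2 \<le> t \<Longrightarrow> t \<le> 1/2 \<Longrightarrow> t < l \<or> u < t \<Longrightarrow> covered n x y P s (x s + t, y s - 1/2)) \<Longrightarrow> VB s \<le> u - l"
  by (rule svl_le) (auto simp: bottom_side_def not_le[symmetric])
lemma svlT: "l \<le> u \<Longrightarrow> (\<And>t. -1/2 \<le> t \<Longrightarrow> t \<le> 1/2 \<Longrightarrow> t < l \<or> u < t \<Longrightarrow> covered n x y P s (x s + t, y s + 1/2)) \<Longrightarrow> VT s \<le> u - l"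
  by (rule svl_le) (auto simp: top_side_def not_le[symmetric])


lemma down:
  assumes p1: "p + 1 < n" and o1: "(p, p + 1) \<in> P" and j: "j < n" "j \<noteq> p + 1" "(p + 1, j) \<in> P"
    and yj: "y (p + 1) - 1 \<le> y j" "y j < y (p + 1)"
  shows "std p"
proof -
  have jlt: "j < p + 1" using yj(2) y_less j(1) p1 by blast
  have "j \<noteq> p" using o1 j(3) asymP by blast
  with jlt have jp: "j < p" by simp
  have pj: "(p, j) \<in> P" using o1 j(3) trP by blast
  have yjp: "y j \<le> y p" using y_le jp p1 by simp
  have yp1: "y (p + 1) = y p + dl" using ysuc p1 by simp
  have xb: "1/2 \<le> x p" "x p \<le> 3/2" "1/2 \<le> x (p+1)" "x (p+1) \<le> 3/2" "1/2 \<le> x j" "x j \<le> 3/2"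
    using xlo xhi p1 j(1) by auto
  have d: "0 < dl" "dl \<le> 1/2" using dl_pos dl_le by auto
  have pn: "p < n" "p \<noteq> p + 1" "j \<noteq> p" using p1 jp by auto
  note F = p1 o1 j yj yjp yp1 xb d pn pj
  consider (L) "x j \<le> x p" "x (p+1) \<le> x p" | (R) "x p \<le> x j" "x p \<le> x (p+1)"
    | (C1) "x (p+1) < x p" "x p < x j" | (C2) "x j < x p" "x p < x (p+1)" by linarith
  then show ?thesis
  proof cases
    case L
    show ?thesis
    proof (rule full_std, rule disjI1, intro ballI)
      fix t :: real assume "t \<in> {-1/2..1/2}"
      hence t: "-1/2 \<le> t" "t \<le> 1/2" by auto
      show "covered n x y P p (left_side x y p t)"
      proof (cases "dl - 1/2 \<le> t")
        case True thus ?thesis unfolding left_side_def using t L F by (intro covI[where j="p+1"]) auto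
      next
        case False thus ?thesis unfolding left_side_def using t L F by (intro covI[where j=j]) auto
      qed
    qed
  next
    case R
    show ?thesis
    proof (rule full_std, rule disjI2, intro ballI)
      fix t :: real assume "t \<in> {-1/2..1/2}"
      hence t: "-1/2 \<le> t" "t \<le> 1/2" by auto
      show "covered n x y P p (right_side x y p t)"
      proof (cases "dl - 1/2 \<le> t")
        case True thus ?thesis unfolding right_side_def using t R F by (intro covI[where j="p+1"]) auto
      next
        case False thus ?thesis unfolding right_side_def using t R F by (intro covI[where j=j]) auto
      qed
    qed
  next
    case C1
    have a: "VL p \<le> (dl - 1/2) - (-1/2)"
      apply (rule svlL) using C1 F by (auto intro!: covI[where j="p+1"])
    have b: "VR p \<le> 1/2 - (y j - y p + 1/2)"
      apply (rule svlR) using C1 F by (auto intro!: covI[where j=j])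
    have c: "VT p \<le> 1/2 - (x (p+1) - x p + 1/2)"
      apply (rule svlT) using C1 F by (auto intro!: covI[where j="p+1"])
    have e: "VB p \<le> (x j - x p - 1/2) - (-1/2)"
      apply (rule svlB) using C1 F by (auto intro!: covI[where j=j])
    have "2 + dl < VB p + VT p + VL p + VR p" using vp pn by blast
    with a b c e F show ?thesis by linarith
  next
    case C2
    have a: "VR p \<le> (dl - 1/2) - (-1/2)"
      apply (rule svlR) using C2 F by (auto intro!: covI[where j="p+1"])
    have b: "VL p \<le> 1/2 - (y j - y p + 1/2)"
      apply (rule svlL) using C2 F by (auto intro!: covI[where j=j])
    have c: "VT p \<le> (x (p+1) - x p - 1/2) - (-1/2)"
      apply (rule svlT) using C2 F by (auto intro!: covI[where j="p+1"])
    have e: "VB p \<le> 1/2 - (x j - x p + 1/2)"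
      apply (rule svlB) using C2 F by (auto intro!: covI[where j=j])
    have "2 + dl < VB p + VT p + VL p + VR p" using vp pn by blast
    with a b c e F show ?thesis by linarith
  qed
qed


lemma up:
  assumes p1: "p + 1 < n" and o1: "(p + 1, p) \<in> P" and j: "j < n" "j \<noteq> p" "(p, j) \<in> P"
    and yj: "y p < y j" "y j \<le> y p + 1"
  shows "std (p + 1)"
proof -
  have jlt: "p < j" using yj(1) y_less j(1) p1 by simp
  have "j \<noteq> p + 1" using o1 j(3) asymP by blast
  with jlt have jp: "p + 1 < j" by simp
  have pj: "(p + 1, j) \<in> P" using o1 j(3) trP by blast
  have yjp: "y (p + 1) \<le> y j" using y_le jp p1 j(1) by simp
  have yp1: "y (p + 1) = y p + dl" using ysuc p1 by simp
  have xb: "1/2 \<le> x p" "x p \<le> 3/2" "1/2 \<le> x (p+1)" "x (p+1) \<le> 3/2" "1/2 \<le> x j" "x j \<le> 3/2"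
    using xlo xhi p1 j(1) by auto
  have d: "0 < dl" "dl \<le> 1/2" using dl_pos dl_le by auto
  have pn: "p < n" "p + 1 \<noteq> p" "j \<noteq> p + 1" using p1 jp by auto
  note F = p1 o1 j yj yjp yp1 xb d pn pj
  consider (L) "x j \<le> x (p+1)" "x p \<le> x (p+1)" | (R) "x (p+1) \<le> x j" "x (p+1) \<le> x p"
    | (C1) "x p < x (p+1)" "x (p+1) < x j" | (C2) "x j < x (p+1)" "x (p+1) < x p" by linarith
  then show ?thesis
  proof cases
    case L
    show ?thesis
    proof (rule full_std, rule disjI1, intro ballI)
      fix t :: real assume "t \<in> {-1/2..1/2}"
      hence t: "-1/2 \<le> t" "t \<le> 1/2" by auto
      show "covered n x y P (p+1) (left_side x y (p+1) t)"
      proof (cases "t \<le> 1/2 - dl")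
        case True thus ?thesis unfolding left_side_def using t L F by (intro covI[where j=p]) auto
      next
        case False thus ?thesis unfolding left_side_def using t L F by (intro covI[where j=j]) auto
      qed
    qed
  next
    case R
    show ?thesis
    proof (rule full_std, rule disjI2, intro ballI)
      fix t :: real assume "t \<in> {-1/2..1/2}"
      hence t: "-1/2 \<le> t" "t \<le> 1/2" by auto
      show "covered n x y P (p+1) (right_side x y (p+1) t)"
      proof (cases "t \<le> 1/2 - dl")
        case True thus ?thesis unfolding right_side_def using t R F by (intro covI[where j=p]) auto
      next
        case False thus ?thesis unfolding right_side_def using t R F by (intro covI[where j=j]) auto
      qed
    qed
  next
    case C1
    have a: "VL (p+1) \<le> 1/2 - (1/2 - dl)"
      apply (rule svlL) using C1 F by (auto intro!: covI[where j=p])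
    have b: "VR (p+1) \<le> (y j - y (p+1) - 1/2) - (-1/2)"
      apply (rule svlR) using C1 F by (auto intro!: covI[where j=j])
    have c: "VB (p+1) \<le> 1/2 - (x p - x (p+1) + 1/2)"
      apply (rule svlB) using C1 F by (auto intro!: covI[where j=p])
    have e: "VT (p+1) \<le> (x j - x (p+1) - 1/2) - (-1/2)"
      apply (rule svlT) using C1 F by (auto intro!: covI[where j=j])
    have "2 + dl < VB (p+1) + VT (p+1) + VL (p+1) + VR (p+1)" using vp p1 by blast
    with a b c e F show ?thesis by linarith
  next
    case C2
    have a: "VR (p+1) \<le> 1/2 - (1/2 - dl)"
      apply (rule svlR) using C2 F by (auto intro!: covI[where j=p])
    have b: "VL (p+1) \<le> (y j - y (p+1) - 1/2) - (-1/2)"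
      apply (rule svlL) using C2 F by (auto intro!: covI[where j=j])
    have c: "VB (p+1) \<le> (x p - x (p+1) - 1/2) - (-1/2)"
      apply (rule svlB) using C2 F by (auto intro!: covI[where j=p])
    have e: "VT (p+1) \<le> 1/2 - (x j - x (p+1) + 1/2)"
      apply (rule svlT) using C2 F by (auto intro!: covI[where j=j])
    have "2 + dl < VB (p+1) + VT (p+1) + VL (p+1) + VR (p+1)" using vp p1 by blast
    with a b c e F show ?thesis by linarith
  qed
qed

lemma both_front:
  assumes p2: "p + 2 < n" and o1: "(p + 1, p) \<in> P" and o2: "(p + 1, p + 2) \<in> P"
  shows "std (p + 1)"
proof -
  have yp1: "y (p + 1) = y p + dl" using ysuc p2 by simp
  have yp2: "y (p + 2) = y p + 2 * dl" using ysuc[of "p+1"] ysuc[of p] p2 by simp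
  have xb: "1/2 \<le> x p" "x p \<le> 3/2" "1/2 \<le> x (p+1)" "x (p+1) \<le> 3/2" "1/2 \<le> x (p+2)" "x (p+2) \<le> 3/2"
    using xlo xhi p2 by auto
  have d: "0 < dl" "dl \<le> 1/2" using dl_pos dl_le by auto
  have pn: "p < n" "p + 1 < n" "p + 1 \<noteq> p" "p + 2 \<noteq> p + 1" using p2 by auto
  note F = p2 o1 o2 yp1 yp2 xb d pn
  consider (L) "x p \<le> x (p+1)" "x (p+2) \<le> x (p+1)" | (R) "x (p+1) \<le> x p" "x (p+1) \<le> x (p+2)"
    | (C1) "x p < x (p+1)" "x (p+1) < x (p+2)" | (C2) "x (p+2) < x (p+1)" "x (p+1) < x p" by linarith
  then show ?thesis
  proof cases
    case L
    show ?thesis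
    proof (rule full_std, rule disjI1, intro ballI)
      fix t :: real assume "t \<in> {-1/2..1/2}"
      hence t: "-1/2 \<le> t" "t \<le> 1/2" by auto
      show "covered n x y P (p+1) (left_side x y (p+1) t)"
      proof (cases "t \<le> 0")
        case True thus ?thesis unfolding left_side_def using t L F by (intro covI[where j=p]) auto
      next
        case False thus ?thesis unfolding left_side_def using t L F by (intro covI[where j="p+2"]) auto
      qed
    qed
  next
    case R
    show ?thesis
    proof (rule full_std, rule disjI2, intro ballI)
      fix t :: real assume "t \<in> {-1/2..1/2}"
      hence t: "-1/2 \<le> t" "t \<le> 1/2" by auto
      show "covered n x y P (p+1) (right_side x y (p+1) t)"
      proof (cases "t \<le> 0")
        case True thus ?thesis unfolding right_side_def using t R F by (intro covI[where j=p]) auto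
      next
        case False thus ?thesis unfolding right_side_def using t R F by (intro covI[where j="p+2"]) auto
      qed
    qed
  next
    case C1
    have a: "VL (p+1) \<le> 1/2 - (1/2 - dl)"
      apply (rule svlL) using C1 F by (auto intro!: covI[where j=p])
    have b: "VR (p+1) \<le> (dl - 1/2) - (-1/2)"
      apply (rule svlR) using C1 F by (auto intro!: covI[where j="p+2"])
    have c: "VB (p+1) \<le> 1/2 - (x p - x (p+1) + 1/2)"
      apply (rule svlB) using C1 F by (auto intro!: covI[where j=p])
    have e: "VT (p+1) \<le> (x (p+2) - x (p+1) - 1/2) - (-1/2)"
      apply (rule svlT) using C1 F by (auto intro!: covI[where j="p+2"])
    have "2 + dl < VB (p+1) + VT (p+1) + VL (p+1) + VR (p+1)" using vp pn by blast
    with a b c e F show ?thesis by linarith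
  next
    case C2
    have a: "VR (p+1) \<le> 1/2 - (1/2 - dl)"
      apply (rule svlR) using C2 F by (auto intro!: covI[where j=p])
    have b: "VL (p+1) \<le> (dl - 1/2) - (-1/2)"
      apply (rule svlL) using C2 F by (auto intro!: covI[where j="p+2"])
    have c: "VB (p+1) \<le> (x p - x (p+1) - 1/2) - (-1/2)"
      apply (rule svlB) using C2 F by (auto intro!: covI[where j=p])
    have e: "VT (p+1) \<le> 1/2 - (x (p+2) - x (p+1) + 1/2)"
      apply (rule svlT) using C2 F by (auto intro!: covI[where j="p+2"])
    have "2 + dl < VB (p+1) + VT (p+1) + VL (p+1) + VR (p+1)" using vp pn by blast
    with a b c e F show ?thesis by linarith
  qed
qed

lemma beta_contra:
  assumes p1: "p + 1 < n" and o1: "(p + 1, p) \<in> P"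
    and j1: "j1 < n" "j1 \<noteq> p + 1" "(p + 1, j1) \<in> P" "x j1 \<le> x (p+1)" "y (p+1) - 1 \<le> y j1" "y j1 \<le> y (p+1)"
    and j2: "j2 < n" "j2 \<noteq> p + 1" "(p + 1, j2) \<in> P" "x (p+1) \<le> x j2" "y (p+1) - 1 \<le> y j2" "y j2 \<le> y (p+1)"
  shows False
proof -
  have yp1: "y (p + 1) = y p + dl" using ysuc p1 by simp
  have xb: "1/2 \<le> x p" "x p \<le> 3/2" "1/2 \<le> x (p+1)" "x (p+1) \<le> 3/2" "1/2 \<le> x j1" "x j2 \<le> 3/2"
    using xlo xhi p1 j1(1) j2(1) by auto
  have d: "0 < dl" "dl \<le> 1/2" using dl_pos dl_le by auto
  have pn: "p < n" "p \<noteq> p + 1" using p1 by auto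
  note F = p1 o1 yp1 xb d pn
  have bb: "VB (p+1) \<le> 0 - 0"
  proof (rule svlB)
    fix t :: real assume t: "-1/2 \<le> t" "t \<le> 1/2"
    show "covered n x y P (p+1) (x (p+1) + t, y (p+1) - 1/2)"
    proof (cases "t \<le> x j1 - x (p+1) + 1/2")
      case True thus ?thesis using t F j1 by (intro covI[where j=j1]) auto
    next
      case False thus ?thesis using t F j1 j2 by (intro covI[where j=j2]) auto
    qed
  qed simp
  have "VL (p+1) \<le> 1/2 - (1/2 - dl) \<or> VR (p+1) \<le> 1/2 - (1/2 - dl)"
  proof (cases "x p \<le> x (p+1)")
    case True
    have "VL (p+1) \<le> 1/2 - (1/2 - dl)"
      apply (rule svlL) using True F by (auto intro!: covI[where j=p])
    thus ?thesis ..
  next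
    case False
    have "VR (p+1) \<le> 1/2 - (1/2 - dl)"
      apply (rule svlR) using False F by (auto intro!: covI[where j=p])
    thus ?thesis ..
  qed
  moreover have "VL (p+1) \<le> 1" "VR (p+1) \<le> 1" "VT (p+1) \<le> 1" by (rule svl_le1)+
  moreover have "2 + dl < VB (p+1) + VT (p+1) + VL (p+1) + VR (p+1)" using vp p1 by blast
  ultimately show False using bb by linarith
qed

lemma gamma_contra:
  assumes p1: "p + 1 < n" and o1: "(p, p + 1) \<in> P"
    and j1: "j1 < n" "j1 \<noteq> p" "(p, j1) \<in> P" "x j1 \<le> x p" "y p \<le> y j1" "y j1 \<le> y p + 1"
    and j2: "j2 < n" "j2 \<noteq> p" "(p, j2) \<in> P" "x p \<le> x j2" "y p \<le> y j2" "y j2 \<le> y p + 1"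
  shows False
proof -
  have yp1: "y (p + 1) = y p + dl" using ysuc p1 by simp
  have xb: "1/2 \<le> x p" "x p \<le> 3/2" "1/2 \<le> x (p+1)" "x (p+1) \<le> 3/2" "1/2 \<le> x j1" "x j2 \<le> 3/2"
    using xlo xhi p1 j1(1) j2(1) by auto
  have d: "0 < dl" "dl \<le> 1/2" using dl_pos dl_le by auto
  have pn: "p < n" "p + 1 \<noteq> p" using p1 by auto
  note F = p1 o1 yp1 xb d pn
  have bb: "VT p \<le> 0 - 0"
  proof (rule svlT)
    fix t :: real assume t: "-1/2 \<le> t" "t \<le> 1/2"
    show "covered n x y P p (x p + t, y p + 1/2)"
    proof (cases "t \<le> x j1 - x p + 1/2")
      case True thus ?thesis using t F j1 by (intro covI[where j=j1]) auto
    next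
      case False thus ?thesis using t F j1 j2 by (intro covI[where j=j2]) auto
    qed
  qed simp
  have "VL p \<le> (dl - 1/2) - (-1/2) \<or> VR p \<le> (dl - 1/2) - (-1/2)"
  proof (cases "x (p+1) \<le> x p")
    case True
    have "VL p \<le> (dl - 1/2) - (-1/2)"
      apply (rule svlL) using True F by (auto intro!: covI[where j="p+1"])
    thus ?thesis ..
  next
    case False
    have "VR p \<le> (dl - 1/2) - (-1/2)"
      apply (rule svlR) using False F by (auto intro!: covI[where j="p+1"])
    thus ?thesis ..
  qed
  moreover have "VL p \<le> 1" "VR p \<le> 1" "VB p \<le> 1" by (rule svl_le1)+
  moreover have "2 + dl < VB p + VT p + VL p + VR p" using vp pn by blast
  ultimately show False using bb by linarith
qed


lemma bot_wit:
  assumes "s < n" "covered n x y P s (a, y s - 1/2)"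
  shows "\<exists>j. j < n \<and> j \<noteq> s \<and> (s, j) \<in> P \<and> x j - 1/2 \<le> a \<and> a \<le> x j + 1/2 \<and> y s - 1 \<le> y j \<and> y j < y s"
proof -
  obtain j where j: "j < n" "j \<noteq> s" "(s, j) \<in> P" "x j - 1/2 \<le> a" "a \<le> x j + 1/2"
    "y j - 1/2 \<le> y s - 1/2" "y s - 1/2 \<le> y j + 1/2"
    using covE[OF assms(2)] by blast
  have "y j \<noteq> y s" using y_inj j(1,2) assms(1) by blast
  with j show ?thesis by (intro exI[of _ j]) auto
qed

lemma top_wit:
  assumes "s < n" "covered n x y P s (a, y s + 1/2)"
  shows "\<exists>j. j < n \<and> j \<noteq> s \<and> (s, j) \<in> P \<and> x j - 1/2 \<le> a \<and> a \<le> x j + 1/2 \<and> y s < y j \<and> y j \<le> y s + 1"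
proof -
  obtain j where j: "j < n" "j \<noteq> s" "(s, j) \<in> P" "x j - 1/2 \<le> a" "a \<le> x j + 1/2"
    "y j - 1/2 \<le> y s + 1/2" "y s + 1/2 \<le> y j + 1/2"
    using covE[OF assms(2)] by blast
  have "y j \<noteq> y s" using y_inj j(1,2) assms(1) by blast
  with j show ?thesis by (intro exI[of _ j]) auto
qed

lemma bad_near:
  assumes s: "s < n" and bd: "bad n x y P s"
  shows "(\<exists>p. s = p + 1 \<and> std p) \<or> std s \<or> (s + 1 < n \<and> std (s + 1))"
proof (rule disjE[OF bad_cases[OF bd]])
  assume BT: "(covered n x y P s (x s - 1/2, y s - 1/2) \<or> covered n x y P s (x s + 1/2, y s - 1/2)) \<and> (covered n x y P s (x s - 1/2, y s + 1/2) \<or> covered n x y P s (x s + 1/2, y s + 1/2))"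
  hence B: "covered n x y P s (x s - 1/2, y s - 1/2) \<or> covered n x y P s (x s + 1/2, y s - 1/2)" and T: "covered n x y P s (x s - 1/2, y s + 1/2) \<or> covered n x y P s (x s + 1/2, y s + 1/2)" by auto
  from B obtain j1 where j1: "j1 < n" "j1 \<noteq> s" "(s, j1) \<in> P" "y s - 1 \<le> y j1" "y j1 < y s"
    using bot_wit[OF s] by blast
  from T obtain j2 where j2: "j2 < n" "j2 \<noteq> s" "(s, j2) \<in> P" "y s < y j2" "y j2 \<le> y s + 1"
    using top_wit[OF s] by blast
  have "j1 < s" using y_less j1 s by blast
  then obtain p where sp: "s = p + 1" by (metis Suc_eq_plus1 less_imp_Suc_add)
  have "s < j2" using y_less j2 s by blast
  hence s1: "s + 1 < n" using j2(1) by simp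
  show ?thesis
  proof (cases "(p, p + 1) \<in> P")
    case True
    have "std p" using down[of p j1] True j1 s sp by auto
    thus ?thesis using sp by blast
  next
    case False
    hence o1: "(p + 1, p) \<in> P" using tot[of p "p+1"] s sp by auto
    show ?thesis
    proof (cases "(s + 1, s) \<in> P")
      case True
      have "std (s + 1)" using up[of s j2] True j2 s1 by auto
      thus ?thesis using s1 by blast
    next
      case False
      hence "(s, s + 1) \<in> P" using tot[of s "s+1"] s1 by auto
      hence "std (p + 1)" using both_front[of p] o1 s1 sp by (simp add: numeral_2_eq_2)
      thus ?thesis using sp by blast
    qed
  qed
next
  assume rest: "(covered n x y P s (x s - 1/2, y s - 1/2) \<and> covered n x y P s (x s + 1/2, y s - 1/2)) \<or> (covered n x y P s (x s - 1/2, y s + 1/2) \<and> covered n x y P s (x s + 1/2, y s + 1/2))"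
  show ?thesis
  proof (rule disjE[OF rest])
  assume "covered n x y P s (x s - 1/2, y s - 1/2) \<and> covered n x y P s (x s + 1/2, y s - 1/2)"
  hence B1: "covered n x y P s (x s - 1/2, y s - 1/2)" and B2: "covered n x y P s (x s + 1/2, y s - 1/2)" by auto
  from B1 obtain j1 where j1: "j1 < n" "j1 \<noteq> s" "(s, j1) \<in> P" "x j1 \<le> x s" "y s - 1 \<le> y j1" "y j1 < y s"
    using bot_wit[OF s] by force
  from B2 obtain j2 where j2: "j2 < n" "j2 \<noteq> s" "(s, j2) \<in> P" "x s \<le> x j2" "y s - 1 \<le> y j2" "y j2 < y s"
    using bot_wit[OF s] by force
  have "j1 < s" using y_less j1 s by blast
  then obtain p where sp: "s = p + 1" by (metis Suc_eq_plus1 less_imp_Suc_add)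
  show ?thesis
  proof (cases "(p, p + 1) \<in> P")
    case True
    have "std p" using down[of p j1] True j1 s sp by auto
    thus ?thesis using sp by blast
  next
    case False
    hence o1: "(p + 1, p) \<in> P" using tot[of p "p+1"] s sp by auto
    have False using beta_contra[of p j1 j2] o1 j1 j2 s sp by auto
    thus ?thesis ..
  qed
next
  assume "covered n x y P s (x s - 1/2, y s + 1/2) \<and> covered n x y P s (x s + 1/2, y s + 1/2)"
  hence T1: "covered n x y P s (x s - 1/2, y s + 1/2)" and T2: "covered n x y P s (x s + 1/2, y s + 1/2)" by auto
  from T1 obtain j1 where j1: "j1 < n" "j1 \<noteq> s" "(s, j1) \<in> P" "x j1 \<le> x s" "y s < y j1" "y j1 \<le> y s + 1"
    using top_wit[OF s] by force
  from T2 obtain j2 where j2: "j2 < n" "j2 \<noteq> s" "(s, j2) \<in> P" "x s \<le> x j2" "y s < y j2" "y j2 \<le> y s + 1"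
    using top_wit[OF s] by force
  have "s < j1" using y_less j1 s by blast
  hence s1: "s + 1 < n" using j1(1) by simp
  show ?thesis
  proof (cases "(s + 1, s) \<in> P")
    case True
    have "std (s + 1)" using up[of s j1] True j1 s1 by auto
    thus ?thesis using s1 by blast
  next
    case False
    hence "(s, s + 1) \<in> P" using tot[of s "s+1"] s1 by auto
    have False using gamma_contra[of s j1 j2] \<open>(s, s + 1) \<in> P\<close> j1 j2 s1 by auto
    thus ?thesis ..
  qed
qed
qed

lemma count_main:
  "card {i. i < n \<and> bad n x y P i \<and> y i \<in> {a..b}} \<le> 3 * card {i. i < n \<and> std i \<and> y i \<in> {a - dl..b + dl}}"
proof -
  let ?B = "{i. i < n \<and> bad n x y P i \<and> y i \<in> {a..b}}"
  let ?S = "{i. i < n \<and> std i \<and> y i \<in> {a - dl..b + dl}}"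
  have d: "0 < dl" using dl_pos .
  have sub: "?B \<subseteq> (\<Union>s\<in>?S. {s - 1, s, s + 1})"
  proof
    fix i assume "i \<in> ?B"
    hence i: "i < n" "bad n x y P i" "a \<le> y i" "y i \<le> b" by auto
    from bad_near[OF i(1,2)] show "i \<in> (\<Union>s\<in>?S. {s - 1, s, s + 1})"
    proof (elim disjE exE conjE)
      fix p assume ip: "i = p + 1" and sp: "std p"
      have "y i = y p + dl" using ysuc i(1) ip by simp
      hence "p \<in> ?S" using i ip sp d by auto
      thus ?thesis using ip by force
    next
      assume "std i"
      hence "i \<in> ?S" using i d by auto
      thus ?thesis by force
    next
      assume i1: "i + 1 < n" and si: "std (i + 1)"
      have "y (i + 1) = y i + dl" using ysuc i1 by simp
      hence "i + 1 \<in> ?S" using i i1 si d by auto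
      thus ?thesis by force
    qed
  qed
  have finS: "finite ?S" by (rule finite_subset[of _ "{..<n}"]) auto
  have "card ?B \<le> card (\<Union>s\<in>?S. {s - 1, s, s + 1})"
    by (rule card_mono) (use finS sub in auto)
  also have "\<dots> \<le> (\<Sum>s\<in>?S. card {s - 1, s, s + 1})" by (rule card_UN_le[OF finS])
  also have "\<dots> \<le> (\<Sum>s\<in>?S. 3)" by (rule sum_mono) (auto simp: card_insert_if)
  also have "\<dots> = 3 * card ?S" by simp
  finally show ?thesis .
qed

end

theorem corollary13:
  fixes w h a b :: real and k n :: nat and x y :: "nat \<Rightarrow> real" and P :: "(nat \<times> nat) set"
  assumes "1 < w" "w \<le> 2" "1 < h" "2 \<le> k"
    and "\<forall>i<n. 1/2 \<le> y i \<and> y i \<le> h - 1/2"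
    and "\<forall>i. i + 1 < n \<longrightarrow> y (i + 1) - y i = 1 / real k"
    and "is_layout w n x P"
    and "reasonable (1 / real k) n x y P"
    and "{a..b} \<subseteq> {1/2..h - 1/2}"
  shows "card {i. i < n \<and> bad n x y P i \<and> y i \<in> {a..b}}
         \<le> 3 * card {i. i < n \<and> standard_bad n x y P i \<and> y i \<in> {a - 1/real k..b + 1/real k}}"
  proof -
  have lay: "lay n x y P (1 / real k)"
  proof
    show "0 < 1 / real k" using assms(4) by simp
    show "1 / real k \<le> 1/2" using assms(4) by (simp add: field_simps)
    show "1/2 \<le> x i" if "i < n" for i using assms(7) that unfolding is_layout_def by auto
    show "x i \<le> 3/2" if "i < n" for i using assms(2,7) that unfolding is_layout_def by force
    show "y (i + 1) = y i + 1 / real k" if "i + 1 < n" for i using assms(6) that by force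
    show "strict_linear_order_on {..<n} P" using assms(7) unfolding is_layout_def by blast
    show "2 + 1 / real k < visible_perimeter n x y P i" if "i < n" for i
      using assms(8) that unfolding reasonable_def sq_gap_def by force
  qed
  show ?thesis using lay.count_main[OF lay, of a b] by simp
qed

end
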